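(* Consider the iterates $\{x_k,y_k,z_k\}$ of the AdaSMSAG method described in the context, and let $x^*$ be an optimal solution of $\min_{x\in X}\psi(x)$. For $k\ge 0$ let $D_k^2:=\frac{\|x^*-z_k\|^2}{2}$. If, for a given $k\ge 1$, $\alpha_k\beta_k-\theta_k\le 0$, then $$\langle G_k,\;y_k-\alpha_k x^*-(1-\alpha_k)y_{k-1}\rangle\le -\frac{\beta_k}{2}\|y_k-x_k\|^2+\alpha_k\theta_k\left(D_{k-1}^2-D_k^2\right).$$
   Context: Setting: $X\subseteq\mathbb{R}^n$ is a nonempty closed convex set; $\psi=f+h$ where $f(x)=E[F(x,\xi)]$, $h(x)=E[H(x,\xi)]$, $\xi$ a random vector supported on $\Xi\subseteq\mathbb{R}^d$, $F(\cdot,\xi)$ convex with Lipschitz continuous gradient and $H(\cdot,\xi)$ convex (possibly nonsmooth) for every $\xi$. $\{\tilde h_\mu\}_{\mu\in(0,\bar\mu]}$ is a smoothing function of $h$ on $X$ (each $\tilde h_\mu$ continuously differentiable and convex on $X$, $|\tilde h_{\mu_2}(x)-\tilde h_{\mu_1}(x)|\le\kappa|\mu_1-\mu_2|$, $\nabla\tilde h_\mu$ is $L/\mu$-Lipschitz on $X$, and $\tilde h_\mu(z)\to h(x)$ as $z\to x,\mu\downarrow0$), and $\tilde\psi_\mu:=f+\tilde h_\mu$. A stochastic first-order oracle returns, for input $x\in X$, $\mu>0$ and a sample $\xi$, a vector $\nabla\tilde\Psi_\mu(x,\xi)$. AdaSMSAG method: inputs are $N\ge1$, batch sizes $m_k\ge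 1$, $\alpha_k\in(0,1)$, $c>0$, $\mu_0>0$, $\beta_k>0$, $\theta_k>0$, and $z_0=y_0\in X$. For $k=1,\dots,N$: $x_k=\alpha_k z_{k-1}+(1-\alpha_k)y_{k-1}$; $\mu_k=\frac{c\mu_0}{k+c}$; draw samples $\xi_{k,1},\dots,\xi_{k,m_k}$ and set $G_k:=\frac1{m_k}\sum_{i=1}^{m_k}\nabla\tilde\Psi_{\mu_k}(x_k,\xi_{k,i})$; $y_k=\arg\min_{y\in X}\{\langle G_k,y-x_k\rangle+\frac{\beta_k}{2}\|y-x_k\|^2\}$; $z_k=\arg\min_{x\in X}\{\langle G_k,x-x_k\rangle+\frac{\theta_k}{2}\|x-z_{k-1}\|^2\}$. Output $y_N$. *)

theory Defs
  imports "HOL-Analysis.Analysis"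
begin

end

theory Submission
  imports Defs
begin

lemma scal: fixes a b :: real assumes b: "b \<ge> 0" and h: "\<And>t. 0 < t \<Longrightarrow> t \<le> 1 \<Longrightarrow> 0 \<le> t * a + t^2 * b"
  shows "a \<ge> 0"
proof (rule ccontr)
  assume "\<not> a \<ge> 0" hence a: "a < 0" by simp
  define t where "t = min 1 (-a/(2*(b+1)))"
  have "0 < -a/(2*(b+1))" using a b by (intro divide_pos_pos) auto
  hence t0: "0 < t" "t \<le> 1" by (auto simp: t_def)
  have "t \<le> -a/(2*(b+1))" unfolding t_def by (rule min.cobounded2)
  hence "t * b \<le> (-a/(2*(b+1))) * b" using b by (rule mult_right_mono)
  also have "\<dots> \<le> -a/2" using a b by (simp add: field_simps)
  finally have "a + t*b < 0" using a by simp
  hence "t * (a + t*b) < 0" using t0 by (simp add: mult_pos_neg)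
  with h[OF t0] show False by (simp add: power2_eq_square algebra_simps)
qed

lemma vi: fixes g a b z u :: "'a::euclidean_space"
  assumes "convex X" "u \<in> X" "th > 0"
    "is_arg_min (\<lambda>v. inner g (v - a) + th/2 * (norm (v - b))\<^sup>2) (\<lambda>v. v \<in> X) z"
  shows "inner g (u - z) + th * inner (z - b) (u - z) \<ge> 0"
proof -
  have zX: "z \<in> X" using assms(4) by (simp add: is_arg_min_def)
  have "0 \<le> t * (inner g (u - z) + th * inner (z - b) (u - z)) + t^2 * (th/2 * (norm (u - z))\<^sup>2)"
    if t: "0 < t" "t \<le> 1" for t
  proof -
    have mem: "z + t *\<^sub>R (u - z) \<in> X"
    proof -
      have "z + t *\<^sub>R (u - z) = (1 - t) *\<^sub>R z + t *\<^sub>R u" by (simp add: algebra_simps)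
      thus ?thesis using assms(1,2) zX t by (simp add: convex_def)
    qed
    have le: "inner g (z - a) + th/2 * (norm (z - b))\<^sup>2 \<le> inner g (z + t *\<^sub>R (u - z) - a) + th/2 * (norm (z + t *\<^sub>R (u - z) - b))\<^sup>2"
      using assms(4) mem by (metis (no_types, lifting) is_arg_min_linorder)
    have e1: "(norm (z + t *\<^sub>R (u - z) - b))\<^sup>2 = (norm (z - b))\<^sup>2 + 2 * t * inner (z - b) (u - z) + t^2 * (norm (u - z))\<^sup>2"
    proof -
      have "z + t *\<^sub>R (u - z) - b = (z - b) + t *\<^sub>R (u - z)" by (simp add: algebra_simps)
      hence "(norm (z + t *\<^sub>R (u - z) - b))\<^sup>2 = (norm ((z - b) + t *\<^sub>R (u - z)))\<^sup>2" by (simp only:)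
      also have "\<dots> = (norm (z - b))\<^sup>2 + 2 * t * inner (z - b) (u - z) + t^2 * (norm (u - z))\<^sup>2"
        unfolding power2_norm_eq_inner by (simp add: inner_add_left inner_add_right inner_commute power2_eq_square algebra_simps)
      finally show ?thesis .
    qed
    have e2: "inner g (z + t *\<^sub>R (u - z) - a) = inner g (z - a) + t * inner g (u - z)"
      by (simp add: inner_diff_right inner_add_right)
    have alg: "\<And>A gu P I Q th t :: real. A + th/2*P \<le> A + t*gu + th/2*(P+2*t*I+t^2*Q) \<Longrightarrow> 0 \<le> t*(gu+th*I)+t^2*(th/2*Q)"
    proof -
      fix A gu P I Q th t :: real
      assume h: "A + th/2*P \<le> A + t*gu + th/2*(P+2*t*I+t^2*Q)"
      have "A + t*gu + th/2*(P+2*t*I+t^2*Q) - (A + th/2*P) = t*(gu+th*I)+t^2*(th/2*Q)"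
        by (simp add: algebra_simps)
      with h show "0 \<le> t*(gu+th*I)+t^2*(th/2*Q)" by linarith
    qed
    show ?thesis using le[unfolded e1 e2] by (rule alg)
  qed
  note h = this
  have b0: "0 \<le> th/2 * (norm (u - z))\<^sup>2" using assms(3) by simp
  show ?thesis by (rule scal[OF b0 h])
qed

theorem lemma4:
  fixes X :: "'a::euclidean_space set"
    and psi :: "'a \<Rightarrow> real"
    and SFO :: "'a \<Rightarrow> real \<Rightarrow> 'b \<Rightarrow> 'a"
    and xi :: "nat \<Rightarrow> nat \<Rightarrow> 'b"
    and N :: nat and m :: "nat \<Rightarrow> nat"
    and alpha beta theta :: "nat \<Rightarrow> real"
    and c mu0 :: real
    and x y z G :: "nat \<Rightarrow> 'a"
    and mu :: "nat \<Rightarrow> real"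
    and xstar :: 'a and k :: nat
  assumes X: "X \<noteq> {}" "closed X" "convex X"
    and N: "N \<ge> 1"
    and m: "\<And>j. m j \<ge> 1"
    and alpha: "\<And>j. 0 < alpha j \<and> alpha j < 1"
    and c: "c > 0" and mu0: "mu0 > 0"
    and beta: "\<And>j. beta j > 0" and theta: "\<And>j. theta j > 0"
    and init: "z 0 = y 0" "y 0 \<in> X"
    and x_def: "\<And>j. 1 \<le> j \<Longrightarrow> j \<le> N \<Longrightarrow>
                  x j = alpha j *\<^sub>R z (j - 1) + (1 - alpha j) *\<^sub>R y (j - 1)"
    and mu_def: "\<And>j. 1 \<le> j \<Longrightarrow> j \<le> N \<Longrightarrow> mu j = c * mu0 / (real j + c)"
    and G_def: "\<And>j. 1 \<le> j \<Longrightarrow> j \<le> N \<Longrightarrow>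
                  G j = (1 / real (m j)) *\<^sub>R (\<Sum>i=1..m j. SFO (x j) (mu j) (xi j i))"
    and y_def: "\<And>j. 1 \<le> j \<Longrightarrow> j \<le> N \<Longrightarrow>
                  is_arg_min (\<lambda>v. inner (G j) (v - x j) + beta j / 2 * (norm (v - x j))\<^sup>2)
                             (\<lambda>v. v \<in> X) (y j)"
    and z_def: "\<And>j. 1 \<le> j \<Longrightarrow> j \<le> N \<Longrightarrow>
                  is_arg_min (\<lambda>v. inner (G j) (v - x j) + theta j / 2 * (norm (v - z (j - 1)))\<^sup>2)
                             (\<lambda>v. v \<in> X) (z j)"
    and opt: "xstar \<in> X" "\<And>v. v \<in> X \<Longrightarrow> psi xstar \<le> psi v"
    and k: "1 \<le> k" "k \<le> N"
    and cond: "alpha k * beta k - theta k \<le> 0"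
  shows "inner (G k) (y k - alpha k *\<^sub>R xstar - (1 - alpha k) *\<^sub>R y (k - 1))
         \<le> - (beta k / 2) * (norm (y k - x k))\<^sup>2
           + alpha k * theta k * ((norm (xstar - z (k - 1)))\<^sup>2 / 2 - (norm (xstar - z k))\<^sup>2 / 2)"
  proof -
  define a where "a = alpha k"
  define b where "b = beta k"
  define th where "th = theta k"
  define g where "g = G k"
  have a01: "0 < a" "a < 1" using alpha[of k] by (auto simp: a_def)
  have b0: "b > 0" using beta[of k] by (simp add: b_def)
  have th0: "th > 0" using theta[of k] by (simp add: th_def)
  have ab: "a * b \<le> th" using cond by (simp add: a_def b_def th_def)
  have ykX: "y k \<in> X" using y_def[OF k] by (simp add: is_arg_min_def)
  have zkX: "z k \<in> X" using z_def[OF k] by (simp add: is_arg_min_def)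
  have ypX: "y (k - 1) \<in> X"
  proof (cases "k = 1")
    case True thus ?thesis using init by simp
  next
    case False thus ?thesis using y_def[of "k-1"] k by (simp add: is_arg_min_def)
  qed
  have xk: "x k = a *\<^sub>R z (k - 1) + (1 - a) *\<^sub>R y (k - 1)" using x_def[OF k] by (simp add: a_def)
  define w where "w = a *\<^sub>R z k + (1 - a) *\<^sub>R y (k - 1)"
  have wX: "w \<in> X" using X(3) zkX ypX a01 unfolding w_def convex_def by simp
  have V: "inner g (xstar - z k) + th * inner (z k - z (k - 1)) (xstar - z k) \<ge> 0"
    using vi[OF X(3) opt(1) th0 z_def[OF k, folded g_def th_def]] .
  have Y: "inner g (y k - x k) + b/2 * (norm (y k - x k))\<^sup>2 \<le> inner g (w - x k) + b/2 * (norm (w - x k))\<^sup>2"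
    using y_def[OF k, folded g_def b_def] wX by (metis (no_types, lifting) is_arg_min_linorder)
  have wx: "w - x k = a *\<^sub>R (z k - z (k - 1))" unfolding w_def xk by (simp add: algebra_simps)
  have Y2: "inner g (y k - x k) + b/2 * (norm (y k - x k))\<^sup>2 \<le> a * inner g (z k - z (k - 1)) + b/2 * a^2 * (norm (z k - z (k - 1)))\<^sup>2"
    using Y unfolding wx using a01 by (simp add: power_mult_distrib)
  have lhs: "y k - a *\<^sub>R xstar - (1 - a) *\<^sub>R y (k - 1) = (y k - x k) + a *\<^sub>R (z (k - 1) - xstar)"
    unfolding xk by (simp add: algebra_simps)
  have id: "2 * inner (z k - z (k - 1)) (xstar - z k) = (norm (xstar - z (k - 1)))\<^sup>2 - (norm (z k - z (k - 1)))\<^sup>2 - (norm (xstar - z k))\<^sup>2"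
  proof -
    have "xstar - z (k - 1) = (xstar - z k) + (z k - z (k - 1))" by simp
    hence "(norm (xstar - z (k - 1)))\<^sup>2 = (norm ((xstar - z k) + (z k - z (k - 1))))\<^sup>2" by (simp only:)
    also have "\<dots> = (norm (xstar - z k))\<^sup>2 + 2 * inner (z k - z (k - 1)) (xstar - z k) + (norm (z k - z (k - 1)))\<^sup>2"
    proof -
      have gen: "\<And>p q::'a. (norm (p + q))\<^sup>2 = (norm p)\<^sup>2 + 2 * inner q p + (norm q)\<^sup>2"
        unfolding power2_norm_eq_inner by (simp add: inner_add_left inner_add_right inner_commute)
      show ?thesis by (rule gen)
    qed
    finally show ?thesis by simp
  qed
  have split: "inner g (z k - z (k - 1)) + inner g (z (k - 1) - xstar) = - inner g (xstar - z k)"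
    by (simp add: inner_diff_right)
  define P where "P = inner g (y k - x k)"
  define Q where "Q = (norm (y k - x k))\<^sup>2"
  define R where "R = inner g (z k - z (k - 1))"
  define S where "S = inner g (z (k - 1) - xstar)"
  define T where "T = inner g (xstar - z k)"
  define I where "I = inner (z k - z (k - 1)) (xstar - z k)"
  define D where "D = (norm (z k - z (k - 1)))\<^sup>2"
  define E1 where "E1 = (norm (xstar - z (k - 1)))\<^sup>2"
  define E2 where "E2 = (norm (xstar - z k))\<^sup>2"
  have G1: "inner g (y k - a *\<^sub>R xstar - (1 - a) *\<^sub>R y (k - 1)) = P + a * S"
    unfolding lhs P_def S_def by (simp add: inner_add_right)
  have h1: "P + b/2 * Q \<le> a * R + b/2 * a^2 * D" using Y2 unfolding P_def Q_def R_def D_def .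
  have h2: "T + th * I \<ge> 0" using V unfolding T_def I_def .
  have h3: "2 * I = E1 - D - E2" using id unfolding I_def D_def E1_def E2_def .
  have h4: "R + S = - T" using split unfolding R_def S_def T_def .
  have D0: "D \<ge> 0" unfolding D_def by simp
  have k1: "a * T + a * th * I \<ge> 0" using h2 a01 by (metis distrib_left mult.assoc mult_nonneg_nonneg less_imp_le)
  have k2: "a * (a * b - th) * D \<le> 0" using ab a01 D0 by (simp add: mult_nonpos_nonneg mult_nonneg_nonpos)
  have "P + a * S \<le> - (b/2) * Q + a * th * ((E1) / 2 - E2 / 2)"
  proof -
    have e: "a * th * (E1/2 - E2/2) = a * th * I + a * th * D / 2"
    proof -
      have E: "E1 = 2*I + D + E2" using h3 by linarith
      show ?thesis unfolding E by (simp add: algebra_simps)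
    qed
    have e2: "a * (a * b - th) * D = b * a^2 * D - a * th * D" by (simp add: algebra_simps power2_eq_square)
    have e3: "a * R + a * S = - (a * T)" using h4 by (metis distrib_left mult_minus_right)
    show ?thesis using h1 k1 k2 e e2 e3 by linarith
  qed
  thus ?thesis using G1 unfolding a_def b_def th_def g_def Q_def E1_def E2_def by simp
qed

end
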